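(* Let $R$ be a ring. The following are equivalent: (i) $R$ is nil-clean; (ii) the upper triangular matrix ring ${\rm T}_n(R)$ is weakly nil-clean for all $n\in\mathbb{N}$; (iii) ${\rm T}_n(R)$ is weakly nil-clean for some $n\ge 3$; (iv) ${\rm T}_n(R)$ is GWNC for some $n\ge 3$.
   Context: All rings are associative with identity. For a ring $S$, $U(S)$, ${\rm Nil}(S)$, ${\rm Id}(S)$ denote units, nilpotents, idempotents. $S$ is GWNC if every $a\in S\setminus U(S)$ can be written as $a=q+e$ or $a=q-e$ with $q\in{\rm Nil}(S)$, $e\in{\rm Id}(S)$. $S$ is weakly nil-clean if for every $a\in S$ there is $e\in{\rm Id}(S)$ with $a-e$ or $a+e$ nilpotent; $S$ is nil-clean if every element is a sum of an idempotent and a nilpotent. ${\rm T}_n(R)$ is the ring of $n\times n$ upper triangular matrices over $R$. *)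

theory Defs
  imports "HOL-Algebra.Ring" "Jordan_Normal_Form.Matrix"
begin

definition nilpotent_el :: "('a, 'b) ring_scheme \<Rightarrow> 'a \<Rightarrow> bool" where
  "nilpotent_el R x \<longleftrightarrow> (\<exists>k::nat. x [^]\<^bsub>R\<^esub> k = \<zero>\<^bsub>R\<^esub>)"

definition idempotent_el :: "('a, 'b) ring_scheme \<Rightarrow> 'a \<Rightarrow> bool" where
  "idempotent_el R e \<longleftrightarrow> e \<otimes>\<^bsub>R\<^esub> e = e"

definition nil_clean :: "('a, 'b) ring_scheme \<Rightarrow> bool" where
  "nil_clean R \<longleftrightarrow> (\<forall>a \<in> carrier R. \<exists>e \<in> carrier R. \<exists>q \<in> carrier R.
      idempotent_el R e \<and> nilpotent_el R q \<and> a = e \<oplus>\<^bsub>R\<^esub> q)"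

definition weakly_nil_clean :: "('a, 'b) ring_scheme \<Rightarrow> bool" where
  "weakly_nil_clean R \<longleftrightarrow> (\<forall>a \<in> carrier R. \<exists>e \<in> carrier R.
      idempotent_el R e \<and> (nilpotent_el R (a \<ominus>\<^bsub>R\<^esub> e) \<or> nilpotent_el R (a \<oplus>\<^bsub>R\<^esub> e)))"

definition GWNC :: "('a, 'b) ring_scheme \<Rightarrow> bool" where
  "GWNC R \<longleftrightarrow> (\<forall>a \<in> carrier R - Units R. \<exists>q \<in> carrier R. \<exists>e \<in> carrier R.
      nilpotent_el R q \<and> idempotent_el R e \<and>
      (a = q \<oplus>\<^bsub>R\<^esub> e \<or> a = q \<ominus>\<^bsub>R\<^esub> e))"

definition class_ring :: "'a::ring_1 ring" where
  "class_ring = \<lparr>carrier = UNIV, mult = (*), one = 1, zero = 0, add = (+)\<rparr>"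

definition upper_tri_ring :: "nat \<Rightarrow> ('a::ring_1) mat ring" where
  "upper_tri_ring n = \<lparr>carrier = {A \<in> carrier_mat n n. upper_triangular A},
      mult = (*), one = 1\<^sub>m n, zero = 0\<^sub>m n n, add = (+)\<rparr>"

end

theory Submission
  imports Defs
begin

lemma UT_simps[simp]:
  "carrier (upper_tri_ring n) = {A \<in> carrier_mat n n. upper_triangular A}"
  "mult (upper_tri_ring n) = (*)"
  "one (upper_tri_ring n) = 1\<^sub>m n"
  "zero (upper_tri_ring n) = 0\<^sub>m n n"
  "add (upper_tri_ring n) = (+)"
  by (simp_all add: upper_tri_ring_def)

lemma CR_simps[simp]:
  "carrier (class_ring :: 'a::ring_1 ring) = UNIV"
  "mult (class_ring :: 'a ring) = (*)"
  "one (class_ring :: 'a ring) = 1"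
  "zero (class_ring :: 'a ring) = 0"
  "add (class_ring :: 'a ring) = (+)"
  by (simp_all add: class_ring_def)

lemma CR_pow: "x [^]\<^bsub>(class_ring :: 'a::ring_1 ring)\<^esub> (k::nat) = x ^ k"
  by (induct k) (simp_all add: nat_pow_def power_Suc2 del: power_Suc)

lemma CR_inv: "\<ominus>\<^bsub>(class_ring :: 'a::ring_1 ring)\<^esub> x = - x"
  unfolding a_inv_def m_inv_def
proof (rule the_equality)
  show "- x \<in> carrier (add_monoid (class_ring :: 'a ring)) \<and>
    x \<otimes>\<^bsub>add_monoid (class_ring :: 'a ring)\<^esub> - x = \<one>\<^bsub>add_monoid (class_ring :: 'a ring)\<^esub> \<and>
    - x \<otimes>\<^bsub>add_monoid (class_ring :: 'a ring)\<^esub> x = \<one>\<^bsub>add_monoid (class_ring :: 'a ring)\<^esub>"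
    by simp
next
  fix y :: 'a assume "y \<in> carrier (add_monoid (class_ring :: 'a ring)) \<and>
    x \<otimes>\<^bsub>add_monoid (class_ring :: 'a ring)\<^esub> y = \<one>\<^bsub>add_monoid (class_ring :: 'a ring)\<^esub> \<and>
    y \<otimes>\<^bsub>add_monoid (class_ring :: 'a ring)\<^esub> x = \<one>\<^bsub>add_monoid (class_ring :: 'a ring)\<^esub>"
  then have "x + y = 0" by simp
  then show "y = - x" by (simp add: add_eq_0_iff)
qed

lemma UT_pow: "A \<in> carrier_mat n n \<Longrightarrow>
   A [^]\<^bsub>(upper_tri_ring n :: 'a::ring_1 mat ring)\<^esub> (k::nat) = A ^\<^sub>m k"
  by (induct k) (simp_all add: nat_pow_def)

lemma ut_uminus: "(A::'a::ring_1 mat) \<in> carrier_mat n n \<Longrightarrow> upper_triangular A \<Longrightarrow> upper_triangular (- A)"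
  unfolding upper_triangular_def by auto

lemma ut_add: "upper_triangular (A::'a::ring_1 mat) \<Longrightarrow> upper_triangular B \<Longrightarrow>
  A \<in> carrier_mat n n \<Longrightarrow> B \<in> carrier_mat n n \<Longrightarrow> upper_triangular (A + B)"
  unfolding upper_triangular_def by auto

lemma UT_inv: assumes A: "(A :: 'a::ring_1 mat) \<in> carrier_mat n n" and U: "upper_triangular A"
  shows "\<ominus>\<^bsub>upper_tri_ring n\<^esub> A = - A"
  unfolding a_inv_def m_inv_def
proof (rule the_equality)
  show "- A \<in> carrier (add_monoid (upper_tri_ring n)) \<and>
    A \<otimes>\<^bsub>add_monoid (upper_tri_ring n)\<^esub> - A = \<one>\<^bsub>add_monoid (upper_tri_ring n)\<^esub> \<and>
    - A \<otimes>\<^bsub>add_monoid (upper_tri_ring n)\<^esub> A = \<one>\<^bsub>add_monoid (upper_tri_ring n)\<^esub>"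
    using A U by (auto simp: ut_uminus intro!: eq_matI)
next
  fix B assume "B \<in> carrier (add_monoid (upper_tri_ring n)) \<and>
    A \<otimes>\<^bsub>add_monoid (upper_tri_ring n)\<^esub> B = \<one>\<^bsub>add_monoid (upper_tri_ring n)\<^esub> \<and>
    B \<otimes>\<^bsub>add_monoid (upper_tri_ring n)\<^esub> A = \<one>\<^bsub>add_monoid (upper_tri_ring n)\<^esub>"
  then have B: "B \<in> carrier_mat n n" and e: "A + B = 0\<^sub>m n n" by auto
  show "B = - A"
  proof (rule eq_matI)
    fix i j assume ij: "i < dim_row (- A)" "j < dim_col (- A)"
    then have "(A + B) $$ (i, j) = 0" using e A by simp
    then show "B $$ (i, j) = (- A) $$ (i, j)" using ij A B by (simp add: add_eq_0_iff)
  qed (use A B in auto)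
qed

lemma sum_single: assumes "(i::nat) < n" "\<And>l. l < n \<Longrightarrow> l \<noteq> i \<Longrightarrow> f l = 0"
  shows "(\<Sum>l\<in>{0..<n}. f l) = f i"
proof -
  have "(\<Sum>l\<in>{0..<n}. f l) = f i + (\<Sum>l\<in>{0..<n}-{i}. f l)"
    using assms(1) sum.remove[of "{0..<n}" i f] by simp
  also have "(\<Sum>l\<in>{0..<n}-{i}. f l) = 0" using assms(2) by (intro sum.neutral) auto
  finally show ?thesis by simp
qed

lemma mult_entry: "A \<in> carrier_mat n n \<Longrightarrow> B \<in> carrier_mat n n \<Longrightarrow> i < n \<Longrightarrow> j < n \<Longrightarrow>
  (A * B) $$ (i, j) = (\<Sum>l\<in>{0..<n}. A $$ (i, l) * B $$ (l, j))"
  by (simp add: scalar_prod_def)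

lemma ut_mult: assumes A: "(A::'a::ring_1 mat) \<in> carrier_mat n n" and B: "B \<in> carrier_mat n n"
  and uA: "upper_triangular A" and uB: "upper_triangular B"
  shows "upper_triangular (A * B)" "\<And>i. i < n \<Longrightarrow> (A * B) $$ (i, i) = A $$ (i, i) * B $$ (i, i)"
proof -
  show "upper_triangular (A * B)"
  proof (rule upper_triangularI)
    fix i j assume ij: "j < i" "i < dim_row (A * B)"
    then have i: "i < n" using A by simp
    have "(\<Sum>l\<in>{0..<n}. A $$ (i, l) * B $$ (l, j)) = 0"
    proof (rule sum.neutral, rule ballI)
      fix l assume l: "l \<in> {0..<n}"
      show "A $$ (i, l) * B $$ (l, j) = 0"
      proof (cases "l < i")
        case True then show ?thesis using uA A i by (auto dest: upper_triangularD)
      next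
        case False then have "j < l" using ij by simp
        then show ?thesis using uB B l by (auto dest: upper_triangularD)
      qed
    qed
    then show "(A * B) $$ (i, j) = 0" using mult_entry[OF A B i] ij i by simp
  qed
next
  fix i assume i: "i < n"
  have "(\<Sum>l\<in>{0..<n}. A $$ (i, l) * B $$ (l, i)) = A $$ (i, i) * B $$ (i, i)"
  proof (rule sum_single[OF i])
    fix l assume l: "l < n" "l \<noteq> i"
    show "A $$ (i, l) * B $$ (l, i) = 0"
    proof (cases "l < i")
      case True then show ?thesis using uA A i by (auto dest: upper_triangularD)
    next
      case False then have "i < l" using l by simp
      then show ?thesis using uB B l by (auto dest: upper_triangularD)
    qed
  qed
  then show "(A * B) $$ (i, i) = A $$ (i, i) * B $$ (i, i)" using mult_entry[OF A B i i] by simp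
qed

lemma ut_pow: assumes A: "(A::'a::ring_1 mat) \<in> carrier_mat n n" and uA: "upper_triangular A"
  shows "upper_triangular (A ^\<^sub>m k) \<and> (\<forall>i<n. (A ^\<^sub>m k) $$ (i, i) = A $$ (i, i) ^ k)"
proof (induct k)
  case 0
  then show ?case using A by auto
next
  case (Suc k)
  have P: "A ^\<^sub>m k \<in> carrier_mat n n" using A by simp
  show ?case using ut_mult[OF P A _ uA] Suc by (simp add: power_Suc2 del: power_Suc)
qed

lemma strict_pow: assumes M: "(M::'a::ring_1 mat) \<in> carrier_mat n n"
  and z: "\<And>i j. i < n \<Longrightarrow> j < n \<Longrightarrow> j \<le> i \<Longrightarrow> M $$ (i, j) = 0"
  shows "\<forall>i j. i < n \<longrightarrow> j < n \<longrightarrow> j < i + p \<longrightarrow> (M ^\<^sub>m p) $$ (i, j) = 0"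
proof (induct p)
  case 0
  then show ?case using M by auto
next
  case (Suc p)
  show ?case
  proof (intro allI impI)
    fix i j assume ij: "i < n" "j < n" "j < i + Suc p"
    have P: "M ^\<^sub>m p \<in> carrier_mat n n" using M by simp
    have "(\<Sum>l\<in>{0..<n}. (M ^\<^sub>m p) $$ (i, l) * M $$ (l, j)) = 0"
    proof (rule sum.neutral, rule ballI)
      fix l assume l: "l \<in> {0..<n}"
      show "(M ^\<^sub>m p) $$ (i, l) * M $$ (l, j) = 0"
      proof (cases "l < i + p")
        case True then show ?thesis using Suc ij l by auto
      next
        case False then have "j \<le> l" using ij by simp
        then show ?thesis using z ij l by auto
      qed
    qed
    then show "(M ^\<^sub>m Suc p) $$ (i, j) = 0" using mult_entry[OF P M ij(1,2)] by simp
  qed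
qed

lemma strict_nil: assumes M: "(M::'a::ring_1 mat) \<in> carrier_mat n n"
  and z: "\<And>i j. i < n \<Longrightarrow> j < n \<Longrightarrow> j \<le> i \<Longrightarrow> M $$ (i, j) = 0"
  shows "M ^\<^sub>m n = 0\<^sub>m n n"
  using strict_pow[OF M z, of n] M by (intro eq_matI) auto

lemma pow_mat_add: assumes A: "(A::'a::semiring_1 mat) \<in> carrier_mat n n"
  shows "A ^\<^sub>m (a + b) = A ^\<^sub>m a * A ^\<^sub>m b"
proof (induct b)
  case 0
  then show ?case using A by simp
next
  case (Suc b)
  have "A ^\<^sub>m (a + Suc b) = (A ^\<^sub>m a * A ^\<^sub>m b) * A" using Suc by simp
  also have "\<dots> = A ^\<^sub>m a * (A ^\<^sub>m b * A)"
    using A by (intro assoc_mult_mat[of _ n n _ n _ n]) auto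
  finally show ?case by simp
qed

lemma pow_mat_mult: assumes A: "(A::'a::semiring_1 mat) \<in> carrier_mat n n"
  shows "A ^\<^sub>m (a * b) = (A ^\<^sub>m a) ^\<^sub>m b"
proof (induct b)
  case 0
  then show ?case using A by simp
next
  case (Suc b)
  have "a * Suc b = a * b + a" by simp
  then have "A ^\<^sub>m (a * Suc b) = A ^\<^sub>m (a * b) * A ^\<^sub>m a" using pow_mat_add[OF A] by metis
  then show ?case using Suc by simp
qed

lemma L1: assumes NC: "nil_clean (class_ring :: 'a::ring_1 ring)"
  shows "weakly_nil_clean (upper_tri_ring n :: 'a mat ring)"
  unfolding weakly_nil_clean_def
proof (intro ballI)
  fix A :: "'a mat" assume "A \<in> carrier (upper_tri_ring n)"
  then have A: "A \<in> carrier_mat n n" and uA: "upper_triangular A" by auto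
  have "\<forall>i. \<exists>e q k. e * e = e \<and> q ^ k = 0 \<and> A $$ (i, i) = e + q"
    using NC unfolding nil_clean_def idempotent_el_def nilpotent_el_def by (simp add: CR_pow)
  then obtain ef qf kf where efq: "\<And>i. ef i * ef i = ef i \<and> qf i ^ kf i = 0 \<and> A $$ (i, i) = ef i + qf i"
    by metis
  define E where "E = mat n n (\<lambda>(i, j). if i = j then ef i else 0)"
  have E: "E \<in> carrier_mat n n" unfolding E_def by simp
  have uE: "upper_triangular E" unfolding E_def by (auto intro!: upper_triangularI)
  have EE: "E * E = E"
  proof (rule eq_matI)
    fix i j assume ij: "i < dim_row E" "j < dim_col E"
    then have i: "i < n" and j: "j < n" using E by auto
    have "(\<Sum>l\<in>{0..<n}. E $$ (i, l) * E $$ (l, j)) = E $$ (i, i) * E $$ (i, j)"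
      by (rule sum_single[OF i]) (use i j in \<open>auto simp: E_def\<close>)
    also have "\<dots> = E $$ (i, j)" using i j efq by (auto simp: E_def)
    finally show "(E * E) $$ (i, j) = E $$ (i, j)" using mult_entry[OF E E i j] by simp
  qed (use E in auto)
  define N where "N = A + - E"
  have N: "N \<in> carrier_mat n n" unfolding N_def using A E by simp
  have uN: "upper_triangular N" unfolding N_def using A E uA uE by (intro ut_add ut_uminus) auto
  have dN: "\<And>i. i < n \<Longrightarrow> N $$ (i, i) = qf i" unfolding N_def using A E efq by (simp add: E_def)
  define K where "K = (\<Sum>i<n. kf i)"
  have qK: "qf i ^ K = 0" if "i < n" for i
  proof -
    have "kf i \<le> K" unfolding K_def using that by (intro member_le_sum) auto
    then have "K = kf i + (K - kf i)" by simp
    then have "qf i ^ K = qf i ^ kf i * qf i ^ (K - kf i)" by (metis power_add)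
    then show ?thesis using efq by simp
  qed
  define M where "M = N ^\<^sub>m K"
  have M: "M \<in> carrier_mat n n" unfolding M_def using N by simp
  have z: "M $$ (i, j) = 0" if "i < n" "j < n" "j \<le> i" for i j
  proof (cases "j = i")
    case True then show ?thesis using ut_pow[OF N uN, of K] dN qK that unfolding M_def by simp
  next
    case False then show ?thesis using ut_pow[OF N uN, of K] that M unfolding M_def
      by (auto dest: upper_triangularD)
  qed
  have "N ^\<^sub>m (K * n) = 0\<^sub>m n n" using strict_nil[OF M z] pow_mat_mult[OF N] unfolding M_def by simp
  moreover have "A \<ominus>\<^bsub>upper_tri_ring n\<^esub> E = N" unfolding a_minus_def N_def using UT_inv[OF E uE] by simp
  ultimately have "nilpotent_el (upper_tri_ring n) (A \<ominus>\<^bsub>upper_tri_ring n\<^esub> E)"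
    unfolding nilpotent_el_def using UT_pow[OF N] by auto
  moreover have "E \<in> carrier (upper_tri_ring n)" using E uE by simp
  moreover have "idempotent_el (upper_tri_ring n) E" unfolding idempotent_el_def using EE by simp
  ultimately show "\<exists>e\<in>carrier (upper_tri_ring n). idempotent_el (upper_tri_ring n) e \<and>
    (nilpotent_el (upper_tri_ring n) (A \<ominus>\<^bsub>upper_tri_ring n\<^esub> e) \<or>
     nilpotent_el (upper_tri_ring n) (A \<oplus>\<^bsub>upper_tri_ring n\<^esub> e))" by blast
qed

lemma L2: assumes W: "weakly_nil_clean (upper_tri_ring n :: 'a::ring_1 mat ring)"
  shows "GWNC (upper_tri_ring n :: 'a mat ring)"
  unfolding GWNC_def
proof (intro ballI)
  fix A :: "'a mat" assume "A \<in> carrier (upper_tri_ring n) - Units (upper_tri_ring n)"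
  then have Ac: "A \<in> carrier (upper_tri_ring n)" by simp
  then have A: "A \<in> carrier_mat n n" and uA: "upper_triangular A" by auto
  from W Ac obtain e where ec: "e \<in> carrier (upper_tri_ring n)" and ei: "idempotent_el (upper_tri_ring n) e"
    and nil: "nilpotent_el (upper_tri_ring n) (A \<ominus>\<^bsub>upper_tri_ring n\<^esub> e) \<or>
     nilpotent_el (upper_tri_ring n) (A \<oplus>\<^bsub>upper_tri_ring n\<^esub> e)"
    unfolding weakly_nil_clean_def by blast
  from ec have E: "e \<in> carrier_mat n n" and uE: "upper_triangular e" by auto
  have mi: "A \<ominus>\<^bsub>upper_tri_ring n\<^esub> e = A + - e"
    unfolding a_minus_def using UT_inv[OF E uE] by simp
  from nil show "\<exists>q\<in>carrier (upper_tri_ring n). \<exists>e\<in>carrier (upper_tri_ring n).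
          nilpotent_el (upper_tri_ring n) q \<and> idempotent_el (upper_tri_ring n) e \<and>
          (A = q \<oplus>\<^bsub>upper_tri_ring n\<^esub> e \<or> A = q \<ominus>\<^bsub>upper_tri_ring n\<^esub> e)"
  proof
    assume n1: "nilpotent_el (upper_tri_ring n) (A \<ominus>\<^bsub>upper_tri_ring n\<^esub> e)"
    have qc: "A + - e \<in> carrier (upper_tri_ring n)" using A E uA uE
      by (auto intro!: ut_add ut_uminus)
    have "A = (A + - e) \<oplus>\<^bsub>upper_tri_ring n\<^esub> e" using A E by (auto intro!: eq_matI)
    moreover have "nilpotent_el (upper_tri_ring n) (A + - e)" using n1 mi by simp
    ultimately show ?thesis using qc ec ei by blast
  next
    assume n2: "nilpotent_el (upper_tri_ring n) (A \<oplus>\<^bsub>upper_tri_ring n\<^esub> e)"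
    have qc: "A + e \<in> carrier (upper_tri_ring n)" using A E uA uE
      by (auto intro!: ut_add)
    have mi2: "(A + e) \<ominus>\<^bsub>upper_tri_ring n\<^esub> e = A + e + - e"
      unfolding a_minus_def using UT_inv[OF E uE] by simp
    have "A = (A + e) \<ominus>\<^bsub>upper_tri_ring n\<^esub> e" unfolding mi2 using A E by (auto intro!: eq_matI)
    moreover have "nilpotent_el (upper_tri_ring n) (A + e)" using n2 by simp
    ultimately show ?thesis using qc ec ei by blast
  qed
qed

lemma L3: assumes n: "n \<ge> 3" and G: "GWNC (upper_tri_ring n :: 'a::ring_1 mat ring)"
  shows "nil_clean (class_ring :: 'a ring)"
  unfolding nil_clean_def idempotent_el_def nilpotent_el_def CR_pow
proof (intro ballI)
  fix x :: 'a
  define A :: "'a mat" where "A = mat n n (\<lambda>(i, j). if i = j then (if i = 0 then x else if i = 1 then - x else 0) else 0)"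
  have A: "A \<in> carrier_mat n n" unfolding A_def by simp
  have uA: "upper_triangular A" unfolding A_def by (auto intro!: upper_triangularI)
  have Ac: "A \<in> carrier (upper_tri_ring n)" using A uA by simp
  have "A \<notin> Units (upper_tri_ring n)"
  proof
    assume "A \<in> Units (upper_tri_ring n)"
    then have "\<exists>B\<in>carrier (upper_tri_ring n). B \<otimes>\<^bsub>upper_tri_ring n\<^esub> A = \<one>\<^bsub>upper_tri_ring n\<^esub>"
      unfolding Units_def by blast
    then obtain B where Bc: "B \<in> carrier (upper_tri_ring n)"
      and BA0: "B \<otimes>\<^bsub>upper_tri_ring n\<^esub> A = \<one>\<^bsub>upper_tri_ring n\<^esub>" by blast
    from BA0 have BA: "B * A = 1\<^sub>m n" by simp
    from Bc have B: "B \<in> carrier_mat n n" and uB: "upper_triangular B" by simp_all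
    have two: "2 < n" using n by simp
    have "(B * A) $$ (2, 2) = B $$ (2, 2) * A $$ (2, 2)" by (rule ut_mult(2)[OF B A uB uA two])
    also have "A $$ (2, 2) = 0" using two by (simp add: A_def)
    finally have h1: "(B * A) $$ (2, 2) = 0" by simp
    have h2: "(1\<^sub>m n :: 'a mat) $$ (2, 2) = 1" using two by simp
    have "(1::'a) = 0" using h1 unfolding BA h2 .
    then show False by simp
  qed
  with Ac G obtain q e where qc: "q \<in> carrier (upper_tri_ring n)" and ec: "e \<in> carrier (upper_tri_ring n)"
    and nq: "nilpotent_el (upper_tri_ring n) q" and ie: "idempotent_el (upper_tri_ring n) e"
    and dec: "A = q \<oplus>\<^bsub>upper_tri_ring n\<^esub> e \<or> A = q \<ominus>\<^bsub>upper_tri_ring n\<^esub> e"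
    unfolding GWNC_def by blast
  from qc have Q: "q \<in> carrier_mat n n" and uQ: "upper_triangular q" by auto
  from ec have E: "e \<in> carrier_mat n n" and uE: "upper_triangular e" by auto
  from nq obtain k where qk0: "q ^\<^sub>m k = 0\<^sub>m n n" unfolding nilpotent_el_def using UT_pow[OF Q] by auto
  have qk: "q $$ (i, i) ^ k = 0" if i: "i < n" for i
  proof -
    have "(q ^\<^sub>m k) $$ (i, i) = 0" using qk0 i by simp
    then show ?thesis using ut_pow[OF Q uQ, of k] i by simp
  qed
  have ee0: "e * e = e" using ie unfolding idempotent_el_def by simp
  have ee: "e $$ (i, i) * e $$ (i, i) = e $$ (i, i)" if i: "i < n" for i
  proof -
    have "(e * e) $$ (i, i) = e $$ (i, i)" using ee0 by simp
    then show ?thesis using ut_mult(2)[OF E E uE uE i] by simp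
  qed
  from dec show "\<exists>e\<in>carrier class_ring. \<exists>q\<in>carrier class_ring.
             e \<otimes>\<^bsub>class_ring\<^esub> e = e \<and> (\<exists>k. q ^ k = \<zero>\<^bsub>class_ring\<^esub>) \<and> x = e \<oplus>\<^bsub>class_ring\<^esub> q"
  proof
    assume "A = q \<oplus>\<^bsub>upper_tri_ring n\<^esub> e"
    then have "A $$ (0, 0) = q $$ (0, 0) + e $$ (0, 0)" using n Q E by simp
    moreover have "A $$ (0, 0) = x" using n by (simp add: A_def)
    ultimately have x: "x = e $$ (0, 0) + q $$ (0, 0)" by (simp add: add.commute)
    have "e $$ (0, 0) * e $$ (0, 0) = e $$ (0, 0)" using ee n by simp
    moreover have "q $$ (0, 0) ^ k = 0" using qk n by simp
    ultimately show ?thesis using x by auto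
  next
    assume "A = q \<ominus>\<^bsub>upper_tri_ring n\<^esub> e"
    then have Aq: "A = q + - e" unfolding a_minus_def UT_inv[OF E uE] UT_simps(5) .
    have h: "A $$ (1, 1) = q $$ (1, 1) + - e $$ (1, 1)" using n Q E unfolding Aq by simp
    have "A $$ (1, 1) = - x" using n by (simp add: A_def)
    with h have mx: "- x = q $$ (1, 1) + - e $$ (1, 1)" by simp
    have x: "x = e $$ (1, 1) + - q $$ (1, 1)"
    proof -
      have "x = - (- x)" by (rule minus_minus[symmetric])
      also have "\<dots> = - (q $$ (1, 1) + - e $$ (1, 1))" by (simp only: mx)
      also have "\<dots> = - (- e $$ (1, 1)) + - q $$ (1, 1)" by (rule minus_add)
      also have "\<dots> = e $$ (1, 1) + - q $$ (1, 1)" by (simp only: minus_minus)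
      finally show ?thesis .
    qed
    have "q $$ (1, 1) ^ k = 0" using qk n by simp
    moreover have "(- q $$ (1, 1)) ^ k = (- 1) ^ k * q $$ (1, 1) ^ k" by (rule power_minus)
    ultimately have q1: "(- q $$ (1, 1)) ^ k = 0" by simp
    have e1: "e $$ (1, 1) * e $$ (1, 1) = e $$ (1, 1)" using ee n by simp
    show ?thesis
      by (rule bexI[where x="e $$ (1, 1)"], rule bexI[where x="- q $$ (1, 1)"])
        (use x q1 e1 in auto)
  qed
qed

theorem proposition2p26:
  shows "(nil_clean (class_ring :: 'a::ring_1 ring)
            \<longleftrightarrow> (\<forall>n\<ge>1. weakly_nil_clean (upper_tri_ring n :: 'a mat ring)))
       \<and> (nil_clean (class_ring :: 'a ring)
            \<longleftrightarrow> (\<exists>n\<ge>3. weakly_nil_clean (upper_tri_ring n :: 'a mat ring)))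
       \<and> (nil_clean (class_ring :: 'a ring)
            \<longleftrightarrow> (\<exists>n\<ge>3. GWNC (upper_tri_ring n :: 'a mat ring)))"
proof -
  have a: "nil_clean (class_ring :: 'a ring) \<Longrightarrow> weakly_nil_clean (upper_tri_ring n :: 'a mat ring)" for n
    by (rule L1)
  have b: "weakly_nil_clean (upper_tri_ring n :: 'a mat ring) \<Longrightarrow> GWNC (upper_tri_ring n :: 'a mat ring)" for n
    by (rule L2)
  have c: "n \<ge> 3 \<Longrightarrow> GWNC (upper_tri_ring n :: 'a mat ring) \<Longrightarrow> nil_clean (class_ring :: 'a ring)" for n
    by (rule L3)
  have d: "(3::nat) \<ge> 1" "(3::nat) \<ge> 3" by auto
  show ?thesis using a b c d by blast
qed

end
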